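(* In the social learning model (for any signal distributions satisfying the standing assumptions), there exist $c>0$ and $0<\gamma<1$ such that for all $n>0$, $$\mathbb{P}(\Xi\ge n)\le c\,\gamma^n.$$
   Context: Social learning model. A state $\theta\in\{-1,+1\}$ is drawn with $\mathbb{P}(\theta=+1)=\mathbb{P}(\theta=-1)=1/2$. Agents $t=1,2,\dots$ receive private signals $s_t\in\mathbb{R}$ that are i.i.d. conditionally on $\theta$, with CDF $F_+$ if $\theta=+1$ and $F_-$ if $\theta=-1$; $F_+$ and $F_-$ are mutually absolutely continuous. Let $L_t=\log\frac{\mathbb{P}(\theta=+1\mid s_t)}{\mathbb{P}(\theta=-1\mid s_t)}$ be the private log-likelihood ratio, and let $G_+$, $G_-$ denote the CDFs of $L_t$ conditional on $\theta=+1$, $\theta=-1$ respectively. Signals are assumed unbounded: for every $M\in\mathbb{R}$, $\mathbb{P}(L_t>M)>0$ and $\mathbb{P}(L_t<-M)>0$. Agent $t$ observes $a_1,\dots,a_{t-1}$ and her own signal and chooses $a_t\in\{-1,+1\}$ (utility $1$ if $a_t=\theta$, else $0$). The public belief is $\mu_t=\mathbb{P}(\theta=+1\mid a_1,\dots,a_{t-1})$ and $\ell_t=\log\frac{\mu_t}{1-\mu_t}$ (so $\ell_1=0$). In equilibrium $a_t=+1$ iff $\ell_t+L_t>0$, and otherwise $a_t=-1$. Consequently $\ell_{t+1}=\ell_t+D_+(\ell_t)$ if $a_t=+1$ and $\ell_{t+1}=\ell_t+D_-(\ell_t)$ if $a_t=-1$, where $D_+(x)=\log\frac{1-G_+(-x)}{1-G_-(-x)}$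 and $D_-(x)=\log\frac{G_+(-x)}{G_-(-x)}$. We write $\mathbb{P}_+(\cdot)=\mathbb{P}(\cdot\mid\theta=+1)$ and $\mathbb{E}_+$ for the corresponding expectation. There is an upset at time $t\ge2$ if $a_{t-1}\ne a_t$. $\Xi=|\{t\ge 2: a_{t-1}\ne a_t\}|$ is the total number of upsets. *)

theory Defs
  imports "HOL-Probability.Probability"
begin

text \<open>Private log-likelihood ratio of a signal x: with a uniform prior,
  log (P(theta=+1|s)/P(theta=-1|s)) = log (dF_+/dF_-)(x).\<close>
definition llr :: "real measure \<Rightarrow> real measure \<Rightarrow> real \<Rightarrow> real" where
  "llr Fp Fm x = ln (enn2real (RN_deriv Fm Fp x))"

definition Gcdf :: "real measure \<Rightarrow> real measure \<Rightarrow> real measure \<Rightarrow> real \<Rightarrow> real" where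
  "Gcdf Fp Fm F x = measure F {y \<in> space F. llr Fp Fm y \<le> x}"

definition Dplus :: "real measure \<Rightarrow> real measure \<Rightarrow> real \<Rightarrow> real" where
  "Dplus Fp Fm x = ln ((1 - Gcdf Fp Fm Fp (- x)) / (1 - Gcdf Fp Fm Fm (- x)))"

definition Dminus :: "real measure \<Rightarrow> real measure \<Rightarrow> real \<Rightarrow> real" where
  "Dminus Fp Fm x = ln (Gcdf Fp Fm Fp (- x) / Gcdf Fp Fm Fm (- x))"

text \<open>Agents are indexed 0,1,2,... (agent t+1 of the paper is index t).
  Ls t is the private log-likelihood ratio of agent t.
  pub_llr gives the public log-likelihood ratio ell_t (ell of the first agent is 0).\<close>
fun pub_llr :: "(real \<Rightarrow> real) \<Rightarrow> (real \<Rightarrow> real) \<Rightarrow> (nat \<Rightarrow> real) \<Rightarrow> nat \<Rightarrow> real" where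
  "pub_llr Dp Dm Ls 0 = 0"
| "pub_llr Dp Dm Ls (Suc t) =
     (let l = pub_llr Dp Dm Ls t in if l + Ls t > 0 then l + Dp l else l + Dm l)"

definition action :: "(real \<Rightarrow> real) \<Rightarrow> (real \<Rightarrow> real) \<Rightarrow> (nat \<Rightarrow> real) \<Rightarrow> nat \<Rightarrow> int" where
  "action Dp Dm Ls t = (if pub_llr Dp Dm Ls t + Ls t > 0 then 1 else -1)"

definition upsets :: "(real \<Rightarrow> real) \<Rightarrow> (real \<Rightarrow> real) \<Rightarrow> (nat \<Rightarrow> real) \<Rightarrow> enat" where
  "upsets Dp Dm Ls =
     (let S = {t. action Dp Dm Ls t \<noteq> action Dp Dm Ls (Suc t)} in
      if finite S then enat (card S) else \<infinity>)"

end

theory Submission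
  imports Defs
begin


locale SL =
  fixes Fp Fm :: "real measure"
  assumes Fp_prob: "prob_space Fp" and Fm_prob: "prob_space Fm"
    and Fp_sets: "sets Fp = sets borel" and Fm_sets: "sets Fm = sets borel"
    and ac1: "absolutely_continuous Fp Fm" and ac2: "absolutely_continuous Fm Fp"
    and unbounded: "\<And>K::real.
         (1/2) * measure Fp {x \<in> space Fp. llr Fp Fm x > K}
           + (1/2) * measure Fm {x \<in> space Fm. llr Fp Fm x > K} > 0
       \<and> (1/2) * measure Fp {x \<in> space Fp. llr Fp Fm x < - K}
           + (1/2) * measure Fm {x \<in> space Fm. llr Fp Fm x < - K} > 0"
begin

interpretation P: prob_space Fp by (rule Fp_prob)
interpretation N: prob_space Fm by (rule Fm_prob)

abbreviation "L \<equiv> llr Fp Fm"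
abbreviation "RN \<equiv> RN_deriv Fm Fp"

lemma space_Fp: "space Fp = UNIV"
  using sets_eq_imp_space_eq[OF Fp_sets] by simp
lemma space_Fm: "space Fm = UNIV"
  using sets_eq_imp_space_eq[OF Fm_sets] by simp

lemma RN_meas[measurable]: "RN \<in> borel_measurable borel"
    using borel_measurable_RN_deriv[of Fm Fp] measurable_cong_sets[OF Fm_sets refl] by blast

lemma L_meas[measurable]: "L \<in> borel_measurable borel"
  unfolding llr_def[abs_def] by measurable

lemma dens: "density Fm RN = Fp"
  by (rule N.density_RN_deriv[OF ac2]) (simp add: Fp_sets Fm_sets)

lemma AE_fin: "AE x in Fm. RN x \<noteq> \<infinity>"
  by (rule N.RN_deriv_finite[OF _ ac2]) (auto simp: Fp_sets Fm_sets P.sigma_finite_measure_axioms)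

lemma AE_nz: "AE x in Fm. RN x \<noteq> 0"
proof -
  let ?Z = "{x. RN x = 0}"
  have "{x \<in> space borel. RN x = 0} \<in> sets borel" by measurable
  then have Zs: "?Z \<in> sets borel" by simp
  have "emeasure Fp ?Z = emeasure (density Fm RN) ?Z" by (simp add: dens)
  also have "\<dots> = (\<integral>\<^sup>+x. RN x * indicator ?Z x \<partial>Fm)"
    using Zs by (subst emeasure_density) (auto simp: Fm_sets)
  also have "\<dots> = (\<integral>\<^sup>+x. 0 \<partial>Fm)"
    by (rule nn_integral_cong) (auto simp: indicator_def)
  finally have "emeasure Fp ?Z = 0" by simp
  then have "?Z \<in> null_sets Fp" using Zs by (simp add: null_sets_def Fp_sets)
  then have "?Z \<in> null_sets Fm"
    using ac1 unfolding absolutely_continuous_def by blast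
  then show ?thesis using AE_not_in[of ?Z Fm] by auto
qed

lemma AE_exp: "AE x in Fm. RN x = ennreal (exp (L x))"
  using AE_fin AE_nz
proof eventually_elim
  case (elim x)
  then obtain r where r: "RN x = ennreal r" "r \<ge> 0"
    using ennreal_cases[of "RN x"] by auto
  with elim have "r > 0" by auto
  then show ?case using r by (simp add: llr_def)
qed

lemma em_Fp: "A \<in> sets borel \<Longrightarrow> emeasure Fp A = (\<integral>\<^sup>+x. RN x * indicator A x \<partial>Fm)"
  by (subst dens[symmetric], subst emeasure_density) (auto simp: Fm_sets)

lemma upper:
  assumes A: "A \<in> sets borel" and sub: "\<And>x. x \<in> A \<Longrightarrow> L x \<le> y"
  shows "measure Fp A \<le> exp y * measure Fm A"
proof -
  have "emeasure Fp A = (\<integral>\<^sup>+x. RN x * indicator A x \<partial>Fm)" by (rule em_Fp[OF A])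
  also have "\<dots> \<le> (\<integral>\<^sup>+x. ennreal (exp y) * indicator A x \<partial>Fm)"
    using AE_exp
  proof (intro nn_integral_mono_AE, eventually_elim)
    case (elim x)
    show ?case using sub[of x] by (cases "x \<in> A") (auto simp: elim)
  qed
  also have "\<dots> = ennreal (exp y) * emeasure Fm A"
    using A by (subst nn_integral_cmult_indicator) (auto simp: Fm_sets)
  finally have "ennreal (measure Fp A) \<le> ennreal (exp y * measure Fm A)"
    by (simp add: P.emeasure_eq_measure N.emeasure_eq_measure ennreal_mult)
  then show ?thesis by (subst (asm) ennreal_le_iff) (auto intro!: mult_nonneg_nonneg)
qed

lemma lower:
  assumes A: "A \<in> sets borel" and sub: "\<And>x. x \<in> A \<Longrightarrow> y \<le> L x"
  shows "exp y * measure Fm A \<le> measure Fp A"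
proof -
  have "ennreal (exp y) * emeasure Fm A = (\<integral>\<^sup>+x. ennreal (exp y) * indicator A x \<partial>Fm)"
    using A by (subst nn_integral_cmult_indicator) (auto simp: Fm_sets)
  also have "\<dots> \<le> (\<integral>\<^sup>+x. RN x * indicator A x \<partial>Fm)"
    using AE_exp
  proof (intro nn_integral_mono_AE, eventually_elim)
    case (elim x)
    show ?case using sub[of x] by (cases "x \<in> A") (auto simp: elim)
  qed
  also have "\<dots> = emeasure Fp A" by (rule em_Fp[OF A, symmetric])
  finally have "ennreal (exp y * measure Fm A) \<le> ennreal (measure Fp A)"
    by (simp add: P.emeasure_eq_measure N.emeasure_eq_measure ennreal_mult)
  then show ?thesis by (subst (asm) ennreal_le_iff) auto
qed

lemma null_iff: "A \<in> sets borel \<Longrightarrow> measure Fp A = 0 \<longleftrightarrow> measure Fm A = 0"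
proof -
  assume A: "A \<in> sets borel"
  have "measure Fp A = 0 \<longleftrightarrow> A \<in> null_sets Fp"
    using A by (simp add: null_sets_def Fp_sets P.emeasure_eq_measure)
  moreover have "measure Fm A = 0 \<longleftrightarrow> A \<in> null_sets Fm"
    using A by (simp add: null_sets_def Fm_sets N.emeasure_eq_measure)
  moreover have "null_sets Fp = null_sets Fm"
    using ac1 ac2 unfolding absolutely_continuous_def by blast
  ultimately show ?thesis by simp
qed

lemma pos_gt: "0 < measure Fp {x. L x > K} \<and> 0 < measure Fm {x. L x > K}"
proof -
  have s: "{x. L x > K} \<in> sets borel" by measurable
  have "0 < measure Fp {x. L x > K} \<or> 0 < measure Fm {x. L x > K}"
    using unbounded[of K] by (auto simp: space_Fp space_Fm)
  then show ?thesis using null_iff[OF s] measure_nonneg[of Fp] measure_nonneg[of Fm]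
    by (metis less_eq_real_def)
qed

lemma pos_lt: "0 < measure Fp {x. L x < K} \<and> 0 < measure Fm {x. L x < K}"
proof -
  have s: "{x. L x < K} \<in> sets borel" by measurable
  have "0 < measure Fp {x. L x < - (-K)} \<or> 0 < measure Fm {x. L x < - (-K)}"
    using unbounded[of "-K"] by (auto simp: space_Fp space_Fm)
  then show ?thesis using null_iff[OF s] measure_nonneg[of Fp] measure_nonneg[of Fm]
    by (metis less_eq_real_def minus_minus)
qed

definition "Gp y = measure Fp {x. L x \<le> y}"
definition "Gm y = measure Fm {x. L x \<le> y}"

lemma Gcdf_p: "Gcdf Fp Fm Fp y = Gp y" by (simp add: Gcdf_def Gp_def space_Fp)
lemma Gcdf_m: "Gcdf Fp Fm Fm y = Gm y" by (simp add: Gcdf_def Gm_def space_Fm)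

lemma Gp_compl: "1 - Gp y = measure Fp {x. L x > y}"
proof -
  have "{x. L x > y} \<in> P.events" by (simp add: Fp_sets)
  from P.prob_compl[OF this] show ?thesis
    unfolding Gp_def space_Fp by (simp add: set_diff_eq not_less)
qed
lemma Gm_compl: "1 - Gm y = measure Fm {x. L x > y}"
proof -
  have "{x. L x > y} \<in> N.events" by (simp add: Fm_sets)
  from N.prob_compl[OF this] show ?thesis
    unfolding Gm_def space_Fm by (simp add: set_diff_eq not_less)
qed

lemma Gp_pos: "0 < Gp y"
proof -
  have "measure Fp {x. L x < y} \<le> Gp y" unfolding Gp_def
    by (rule P.finite_measure_mono) (auto simp: Fp_sets)
  then show ?thesis using pos_lt[of y] by linarith
qed
lemma Gm_pos: "0 < Gm y"
proof -
  have "measure Fm {x. L x < y} \<le> Gm y" unfolding Gm_def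
    by (rule N.finite_measure_mono) (auto simp: Fm_sets)
  then show ?thesis using pos_lt[of y] by linarith
qed
lemma Gp_lt1: "Gp y < 1" using Gp_compl[of y] pos_gt[of y] by linarith
lemma Gm_lt1: "Gm y < 1" using Gm_compl[of y] pos_gt[of y] by linarith

end



fun ast :: "(real \<Rightarrow> real) \<Rightarrow> (real \<Rightarrow> real) \<Rightarrow> real \<Rightarrow> nat \<Rightarrow> real" where
  "ast h1 h2 z 0 = 1"
| "ast h1 h2 z (Suc r) = (1 - h1 z) * ast h1 h2 (z + ln ((1 - h1 z) / (1 - h2 z))) r"

lemma ln_one_minus_ge: fixes g :: real assumes "0 \<le> g" "g < 1" shows "- (g / (1 - g)) \<le> ln (1 - g)"
proof -
  have "ln (1 / (1 - g)) \<le> 1 / (1 - g) - 1" by (rule ln_le_minus_one) (use assms in simp)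
  moreover have "ln (1 / (1 - g)) = - ln (1 - g)" using assms by (simp add: ln_div)
  moreover have "1 / (1 - g) - 1 = g / (1 - g)" using assms by (simp add: field_simps)
  ultimately show ?thesis by linarith
qed

lemma ast_bound:
  assumes B: "B > 0"
    and h: "\<And>z. z \<ge> 0 \<Longrightarrow> 0 \<le> h1 z \<and> h1 z < 1 \<and> h2 z < 1 \<and> h1 z \<le> B * exp (- z) * (h2 z - h1 z)"
  shows "z \<ge> 0 \<Longrightarrow> exp (- B * exp (- z)) \<le> ast h1 h2 z r"
proof (induction r arbitrary: z)
  case 0
  then show ?case using B by simp
next
  case (Suc r)
  define g where "g = h1 z"
  define g2 where "g2 = h2 z"
  have g: "0 \<le> g" "g < 1" "g2 < 1" "g \<le> B * exp (- z) * (g2 - g)"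
    using h[OF Suc.prems] by (auto simp: g_def g2_def)
  have "0 \<le> B * exp (- z) * (g2 - g)" using g by linarith
  moreover have "0 < B * exp (- z)" using B by simp
  ultimately have gg: "g \<le> g2" by (simp add: zero_le_mult_iff)
  define t where "t = (1 - g) / (1 - g2)"
  have t1: "1 \<le> t" using g gg by (simp add: t_def)
  define z' where "z' = z + ln t"
  have z': "z \<le> z'" using t1 by (simp add: z'_def)
  have IH: "exp (- B * exp (- z')) \<le> ast h1 h2 z' r" using Suc.IH[of z'] Suc.prems z' by simp
  have ez: "exp (- z') = exp (- z) * (1 - g2) / (1 - g)"
    using t1 g by (simp add: z'_def exp_diff exp_minus t_def field_simps)
  have key: "g / (1 - g) \<le> B * exp (- z) - B * exp (- z')"
  proof -
    have "B * exp (- z) - B * exp (- z') = B * exp (- z) * (g2 - g) / (1 - g)"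
      using g by (simp add: ez field_simps)
    moreover have "g / (1 - g) \<le> B * exp (- z) * (g2 - g) / (1 - g)"
      using g by (intro divide_right_mono) auto
    ultimately show ?thesis by simp
  qed
  have "exp (- B * exp (- z)) = exp (- (B * exp (- z) - B * exp (- z'))) * exp (- B * exp (- z'))"
    by (simp add: exp_add[symmetric])
  also have "\<dots> \<le> (1 - g) * exp (- B * exp (- z'))"
  proof (rule mult_right_mono)
    have "- (B * exp (- z) - B * exp (- z')) \<le> ln (1 - g)"
      using key ln_one_minus_ge[OF g(1,2)] by linarith
    then have "exp (- (B * exp (- z) - B * exp (- z'))) \<le> exp (ln (1 - g))" by simp
    then show "exp (- (B * exp (- z) - B * exp (- z'))) \<le> 1 - g" using g by simp
  qed simp
  also have "\<dots> \<le> (1 - g) * ast h1 h2 z' r"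
    using IH g by (intro mult_left_mono) auto
  finally show ?case by (simp add: g_def g2_def z'_def t_def)
qed




fun stay :: "(real \<Rightarrow> bool \<Rightarrow> real) \<Rightarrow> (real \<Rightarrow> bool \<Rightarrow> real) \<Rightarrow> real \<Rightarrow> bool \<Rightarrow> nat \<Rightarrow> real" where
  "stay q st x b 0 = 1"
| "stay q st x b (Suc r) = q x b * stay q st (st x b) b r"

lemma cond_alg:
  fixes z a2 b2 c :: real
  assumes z: "0 \<le> z" and c: "0 < c" and a: "0 \<le> a2" "a2 \<le> 1"
    and s: "z \<le> 1 \<Longrightarrow> a2 \<le> b2 - c" and l: "1 \<le> z \<Longrightarrow> a2 \<le> exp (- z) * b2"
  shows "a2 \<le> (2 + 3 / c) * exp (- z) * (b2 - a2)"
proof (cases "z \<le> 1")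
  case True
  have d: "c \<le> b2 - a2" using s[OF True] by linarith
  have e1: "1 / 3 \<le> exp (- z)"
  proof -
    have "exp 1 \<le> (3::real)" by (rule exp_le)
    then have "1 / (3::real) \<le> 1 / exp (1::real)" by (intro divide_left_mono) auto
    also have "\<dots> = exp (-1::real)" by (simp add: exp_minus field_simps)
    also have "\<dots> \<le> exp (- z)" using True by simp
    finally show ?thesis .
  qed
  have "1 \<le> (3 / c) * (1/3) * c" using c by simp
  also have "\<dots> \<le> (3 / c) * exp (- z) * (b2 - a2)"
    using c e1 d by (intro mult_mono) auto
  also have "\<dots> \<le> (2 + 3 / c) * exp (- z) * (b2 - a2)"
    using c d by (intro mult_right_mono) auto
  finally show ?thesis using a by linarith
next
  case False
  then have z1: "1 \<le> z" by simp
  have h: "a2 \<le> exp (- z) * b2" by (rule l[OF z1])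
  have "exp (- z) \<le> exp (- 1)" using z1 by simp
  also have "exp (-1::real) \<le> 1/2"
  proof -
    have "2 \<le> exp (1::real)" using exp_ge_add_one_self[of 1] by simp
    then show ?thesis by (simp add: exp_minus field_simps)
  qed
  finally have e2: "exp (- z) \<le> 1/2" .
  have "0 \<le> exp (- z) * b2" using h a by linarith
  then have b0: "0 \<le> b2" by (simp add: zero_le_mult_iff)
  have "a2 \<le> b2 / 2" using h e2 b0 by (metis mult_right_mono order_trans times_divide_eq_left mult_1)
  then have d: "b2 / 2 \<le> b2 - a2" by linarith
  have "a2 \<le> exp (- z) * b2" by (rule h)
  also have "\<dots> = 2 * exp (- z) * (b2 / 2)" by simp
  also have "\<dots> \<le> 2 * exp (- z) * (b2 - a2)" using d by (intro mult_left_mono) auto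
  also have "\<dots> \<le> (2 + 3 / c) * exp (- z) * (b2 - a2)"
    using c d b0 by (intro mult_right_mono) auto
  finally show ?thesis .
qed




context SL begin

interpretation P: prob_space Fp by (rule Fp_prob)
interpretation N: prob_space Fm by (rule Fm_prob)

definition "qp x b = (if b then 1 - Gp (-x) else Gp (-x))"
definition "qm x b = (if b then 1 - Gm (-x) else Gm (-x))"
definition "stepf x b = x + (if b then Dplus Fp Fm x else Dminus Fp Fm x)"

lemma Dplus_eq: "Dplus Fp Fm x = ln ((1 - Gp (-x)) / (1 - Gm (-x)))"
  by (simp add: Dplus_def Gcdf_p Gcdf_m)
lemma Dminus_eq: "Dminus Fp Fm x = ln (Gp (-x) / Gm (-x))"
  by (simp add: Dminus_def Gcdf_p Gcdf_m)

lemma G_bounds: "0 < Gp y" "Gp y < 1" "0 < Gm y" "Gm y < 1"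
  using Gp_pos Gp_lt1 Gm_pos Gm_lt1 by auto

lemma step_T: "0 \<le> stepf x True"
proof -
  have "exp (-x) * measure Fm {y. L y > -x} \<le> measure Fp {y. L y > -x}"
    by (rule lower) auto
  then have h: "exp (-x) * (1 - Gm (-x)) \<le> 1 - Gp (-x)" by (simp add: Gm_compl Gp_compl)
  have p: "0 < 1 - Gm (-x)" "0 < 1 - Gp (-x)" using G_bounds by auto
  have "exp (-x) \<le> (1 - Gp (-x)) / (1 - Gm (-x))" using h p by (simp add: pos_le_divide_eq)
  then have "-x \<le> ln ((1 - Gp (-x)) / (1 - Gm (-x)))" using p by (subst ln_ge_iff) auto
  then show ?thesis by (simp add: stepf_def Dplus_eq)
qed

lemma step_F: "stepf x False \<le> 0"
proof -
  have "measure Fp {y. L y \<le> -x} \<le> exp (-x) * measure Fm {y. L y \<le> -x}"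
    by (rule upper) auto
  then have h: "Gp (-x) \<le> exp (-x) * Gm (-x)" by (simp add: Gm_def Gp_def)
  have p: "0 < Gm (-x)" "0 < Gp (-x)" using G_bounds by auto
  have "Gp (-x) / Gm (-x) \<le> exp (-x)" using h p by (simp add: pos_divide_le_eq)
  then have "ln (Gp (-x) / Gm (-x)) \<le> ln (exp (-x))" using p by (subst ln_le_cancel_iff) auto
  then show ?thesis by (simp add: stepf_def Dminus_eq)
qed

lemma q_pos: "0 < qp x b" "0 < qm x b"
  using G_bounds by (auto simp: qp_def qm_def)

lemma q_sum: "qp x True + qp x False = 1" "qm x True + qm x False = 1"
  by (auto simp: qp_def qm_def)

lemma q_ratio: "qp x b = exp (stepf x b - x) * qm x b"
proof (cases b)
  case True
  have p: "0 < 1 - Gm (-x)" "0 < 1 - Gp (-x)" using G_bounds by auto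
  then show ?thesis using True by (simp add: qp_def qm_def stepf_def Dplus_eq)
next
  case False
  have p: "0 < Gm (-x)" "0 < Gp (-x)" using G_bounds by auto
  then show ?thesis using False by (simp add: qp_def qm_def stepf_def Dminus_eq)
qed

definition "c1 = (1 - exp (-1)) * Gm (-1)"
definition "c2 = (1 - exp (-1)) * (1 - Gp 1)"
definition "B1 = 2 + 3 / c1"
definition "B2 = 2 + 3 / c2"

lemma c_pos: "0 < c1" "0 < c2"
  using G_bounds by (auto simp: c1_def c2_def)
lemma B_pos: "0 < B1" "0 < B2"
  using c_pos by (auto simp: B1_def B2_def intro: add_pos_nonneg)

lemma condT: assumes z: "0 \<le> z" shows "Gp (-z) \<le> B1 * exp (- z) * (Gm (-z) - Gp (-z))"
  unfolding B1_def
proof (rule cond_alg[OF z c_pos(1)])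
  show "0 \<le> Gp (-z)" "Gp (-z) \<le> 1" using G_bounds[of "-z"] by auto
next
  assume z1: "1 \<le> z"
  have "measure Fp {y. L y \<le> -z} \<le> exp (-z) * measure Fm {y. L y \<le> -z}"
    by (rule upper) auto
  then show "Gp (- z) \<le> exp (- z) * Gm (- z)" by (simp add: Gm_def Gp_def)
next
  assume z1: "z \<le> 1"
  define A1 where "A1 = {y. L y \<le> -1}"
  define A2 where "A2 = {y. -1 < L y \<and> L y \<le> -z}"
  have AA: "{y. L y \<le> -z} = A1 \<union> A2" "A1 \<inter> A2 = {}" using z1 by (auto simp: A1_def A2_def)
  have s: "A1 \<in> sets borel" "A2 \<in> sets borel" unfolding A1_def A2_def by measurable
  have ep: "Gp (-z) = measure Fp A1 + measure Fp A2"
    unfolding Gp_def AA(1) by (rule P.finite_measure_Union) (use s AA in \<open>auto simp: Fp_sets\<close>)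
  have em: "Gm (-z) = measure Fm A1 + measure Fm A2"
    unfolding Gm_def AA(1) by (rule N.finite_measure_Union) (use s AA in \<open>auto simp: Fm_sets\<close>)
  have g1: "Gm (-1) = measure Fm A1" by (simp add: Gm_def A1_def)
  have u1: "measure Fp A1 \<le> exp (-1) * measure Fm A1"
    by (rule upper[OF s(1)]) (auto simp: A1_def)
  have u2: "measure Fp A2 \<le> exp (-z) * measure Fm A2"
    by (rule upper[OF s(2)]) (auto simp: A2_def)
  have "exp (-z) * measure Fm A2 \<le> 1 * measure Fm A2"
    using z by (intro mult_right_mono) auto
  then show "Gp (- z) \<le> Gm (- z) - c1"
    using ep em g1 u1 u2 by (simp add: c1_def algebra_simps)
qed

lemma condF: assumes z: "0 \<le> z" shows "1 - Gm z \<le> B2 * exp (- z) * ((1 - Gp z) - (1 - Gm z))"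
  unfolding B2_def
proof (rule cond_alg[OF z c_pos(2)])
  show "0 \<le> 1 - Gm z" "1 - Gm z \<le> 1" using G_bounds[of z] by auto
next
  assume z1: "1 \<le> z"
  have "exp z * measure Fm {y. L y > z} \<le> measure Fp {y. L y > z}"
    by (rule lower) auto
  then have "measure Fm {y. L y > z} \<le> measure Fp {y. L y > z} / exp z"
    by (simp add: pos_le_divide_eq mult.commute)
  then show "1 - Gm z \<le> exp (- z) * (1 - Gp z)"
    by (simp add: Gm_compl Gp_compl exp_minus divide_inverse mult.commute)
next
  assume z1: "z \<le> 1"
  define A1 where "A1 = {y. 1 < L y}"
  define A2 where "A2 = {y. z < L y \<and> L y \<le> 1}"
  have AA: "{y. z < L y} = A1 \<union> A2" "A1 \<inter> A2 = {}" using z1 by (auto simp: A1_def A2_def)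
  have s: "A1 \<in> sets borel" "A2 \<in> sets borel" unfolding A1_def A2_def by measurable
  have ep: "1 - Gp z = measure Fp A1 + measure Fp A2"
    unfolding Gp_compl AA(1) by (rule P.finite_measure_Union) (use s AA in \<open>auto simp: Fp_sets\<close>)
  have em: "1 - Gm z = measure Fm A1 + measure Fm A2"
    unfolding Gm_compl AA(1) by (rule N.finite_measure_Union) (use s AA in \<open>auto simp: Fm_sets\<close>)
  have g1: "1 - Gp 1 = measure Fp A1" by (simp add: Gp_compl A1_def)
  have u1: "exp 1 * measure Fm A1 \<le> measure Fp A1"
    by (rule lower[OF s(1)]) (auto simp: A1_def)
  then have u1': "measure Fm A1 \<le> exp (-1) * measure Fp A1"
    by (simp add: exp_minus field_simps)
  have u2: "exp z * measure Fm A2 \<le> measure Fp A2"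
    by (rule lower[OF s(2)]) (auto simp: A2_def)
  have "1 * measure Fm A2 \<le> exp z * measure Fm A2"
    using z by (intro mult_right_mono) auto
  have "c2 = measure Fp A1 - exp (-1) * measure Fp A1" by (simp add: c2_def g1 algebra_simps)
  then show "1 - Gm z \<le> (1 - Gp z) - c2"
    using ep em u1' u2 \<open>1 * measure Fm A2 \<le> exp z * measure Fm A2\<close> by linarith
qed

lemma stayT_eq: "stay qp stepf x True r = ast (\<lambda>z. Gp (-z)) (\<lambda>z. Gm (-z)) x r"
  by (induction r arbitrary: x) (auto simp: qp_def stepf_def Dplus_eq)

lemma stayF_eq: "stay qm stepf x False r = ast (\<lambda>z. 1 - Gm z) (\<lambda>z. 1 - Gp z) (-x) r"
proof (induction r arbitrary: x)
  case 0 then show ?case by simp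
next
  case (Suc r)
  have p: "0 < Gm (-x)" "0 < Gp (-x)" using G_bounds by auto
  have "- stepf x False = - x + ln (Gm (-x) / Gp (-x))"
    using p by (simp add: stepf_def Dminus_eq ln_div)
  then show ?case using Suc by (simp add: qm_def)
qed

lemma stayT: assumes "0 \<le> x" shows "exp (- B1) \<le> stay qp stepf x True r"
proof -
  have "exp (- B1 * exp (- x)) \<le> ast (\<lambda>z. Gp (-z)) (\<lambda>z. Gm (-z)) x r"
    by (rule ast_bound[OF B_pos(1) _ assms]) (simp add: G_bounds less_imp_le condT)
  moreover have "exp (- B1) \<le> exp (- B1 * exp (- x))"
    using assms B_pos by simp
  ultimately show ?thesis unfolding stayT_eq by (rule order_trans[rotated])
qed

lemma stayF: assumes "x \<le> 0" shows "exp (- B2) \<le> stay qm stepf x False r"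
proof -
  have "exp (- B2 * exp (- (-x))) \<le> ast (\<lambda>z. 1 - Gm z) (\<lambda>z. 1 - Gp z) (-x) r"
  proof (rule ast_bound[OF B_pos(2)])
    fix z :: real assume "0 \<le> z"
    then show "0 \<le> 1 - Gm z \<and> 1 - Gm z < 1 \<and> 1 - Gp z < 1 \<and>
       1 - Gm z \<le> B2 * exp (- z) * (1 - Gp z - (1 - Gm z))"
      using condF[of z] G_bounds[of z] by auto
  qed (use assms in simp)
  moreover have "exp (- B2) \<le> exp (- B2 * exp (- (-x)))"
    using assms B_pos by simp
  ultimately show ?thesis unfolding stayF_eq by (rule order_trans[rotated])
qed

end



fun xp :: "(real \<Rightarrow> bool \<Rightarrow> real) \<Rightarrow> bool list \<Rightarrow> nat \<Rightarrow> real" where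
  "xp st h 0 = 0"
| "xp st h (Suc i) = st (xp st h i) (h ! i)"

definition W :: "(real \<Rightarrow> bool \<Rightarrow> real) \<Rightarrow> (real \<Rightarrow> bool \<Rightarrow> real) \<Rightarrow> bool list \<Rightarrow> real" where
  "W q st h = (\<Prod>i<length h. q (xp st h i) (h ! i))"

definition ups :: "bool list \<Rightarrow> nat" where
  "ups h = card {i. Suc i < length h \<and> h ! i \<noteq> h ! Suc i}"

lemma xp_app: "i \<le> length h \<Longrightarrow> xp st (h @ [b]) i = xp st h i"
  by (induction i) (auto simp: nth_append)

lemma xp_app_last: "xp st (h @ [b]) (Suc (length h)) = st (xp st h (length h)) b"
  by (simp add: xp_app)

lemma W_app: "W q st (h @ [b]) = W q st h * q (xp st h (length h)) b"
proof -
  have "W q st (h @ [b]) = (\<Prod>i<Suc (length h). q (xp st (h @ [b]) i) ((h @ [b]) ! i))"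
    by (simp add: W_def)
  also have "\<dots> = (\<Prod>i<length h. q (xp st (h @ [b]) i) ((h @ [b]) ! i)) * q (xp st h (length h)) b"
    by (simp add: xp_app)
  also have "(\<Prod>i<length h. q (xp st (h @ [b]) i) ((h @ [b]) ! i)) = W q st h"
    unfolding W_def by (rule prod.cong) (auto simp: xp_app nth_append)
  finally show ?thesis .
qed

lemma W_Nil: "W q st [] = 1" by (simp add: W_def)

lemma ups_app: assumes "h \<noteq> []" shows "ups (h @ [b]) = ups h + (if last h \<noteq> b then 1 else 0)"
proof -
  define m where "m = length h"
  have m: "m \<ge> 1" using assms by (cases h) (auto simp: m_def)
  have lst: "last h = h ! (m - 1)" using assms by (simp add: m_def last_conv_nth)
  define S where "S = {i. Suc i < length h \<and> h ! i \<noteq> h ! Suc i}"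
  have fS: "finite S" unfolding S_def by (rule finite_subset[of _ "{..<length h}"]) auto
  have mS: "m - 1 \<notin> S" using m by (auto simp: S_def m_def)
  have eq: "{i. Suc i < length (h @ [b]) \<and> (h @ [b]) ! i \<noteq> (h @ [b]) ! Suc i}
      = S \<union> (if last h \<noteq> b then {m - 1} else {})"
  proof (intro set_eqI iffI)
    fix i assume "i \<in> {i. Suc i < length (h @ [b]) \<and> (h @ [b]) ! i \<noteq> (h @ [b]) ! Suc i}"
    then have i: "Suc i < Suc m" "(h @ [b]) ! i \<noteq> (h @ [b]) ! Suc i" by (auto simp: m_def)
    show "i \<in> S \<union> (if last h \<noteq> b then {m - 1} else {})"
    proof (cases "Suc i < m")
      case True then show ?thesis using i by (auto simp: S_def m_def nth_append)
    next
      case False then have "i = m - 1" using i by simp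
      then show ?thesis using i m lst by (auto simp: nth_append m_def)
    qed
  next
    fix i assume "i \<in> S \<union> (if last h \<noteq> b then {m - 1} else {})"
    then show "i \<in> {i. Suc i < length (h @ [b]) \<and> (h @ [b]) ! i \<noteq> (h @ [b]) ! Suc i}"
      using m lst by (auto simp: S_def nth_append m_def split: if_splits)
  qed
  show ?thesis unfolding ups_def eq S_def[symmetric] using fS mS by (auto)
qed

lemma ups_single: "ups [b] = 0" by (simp add: ups_def)

lemma finite_len: "finite {h :: bool list. length h = m}"
  using finite_lists_length_eq[of "UNIV :: bool set" m] by simp

lemma sum_len_Suc:
  "(\<Sum>h\<in>{h :: bool list. length h = Suc m}. f h) = (\<Sum>h\<in>{h. length h = m}. f (h @ [True]) + f (h @ [False]))"
proof -
  have img: "{h :: bool list. length h = Suc m} = (\<lambda>(h, b). h @ [b]) ` ({h. length h = m} \<times> UNIV)"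
    by (auto simp: length_Suc_conv_rev image_def)
  have inj: "inj_on (\<lambda>(h, b). h @ [b]) ({h :: bool list. length h = m} \<times> UNIV)"
    by (auto simp: inj_on_def)
  have "(\<Sum>h\<in>{h :: bool list. length h = Suc m}. f h) = (\<Sum>(h, b)\<in>{h. length h = m} \<times> UNIV. f (h @ [b]))"
    unfolding img by (subst sum.reindex[OF inj]) (simp add: case_prod_unfold)
  also have "\<dots> = (\<Sum>h\<in>{h. length h = m}. \<Sum>b\<in>UNIV. f (h @ [b]))"
    by (simp add: sum.cartesian_product)
  also have "\<dots> = (\<Sum>h\<in>{h. length h = m}. f (h @ [True]) + f (h @ [False]))"
    by (simp add: UNIV_bool add.commute)
  finally show ?thesis .
qed

lemma stay_nonneg: "(\<And>x b. 0 \<le> q x b) \<Longrightarrow> 0 \<le> stay q st x b r"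
  by (induction r arbitrary: x) auto

lemma W_nonneg: "(\<And>x b. 0 \<le> q x b) \<Longrightarrow> 0 \<le> W q st h"
  unfolding W_def by (rule prod_nonneg) auto




context SL begin

abbreviation "Wp h \<equiv> W qp stepf h"
abbreviation "Wm h \<equiv> W qm stepf h"
abbreviation "xh h \<equiv> xp stepf h (length h)"

definition "pmin = min (exp (- B1)) (exp (- B2))"
definition "gam = 1 - pmin / 4"

lemma pmin: "0 < pmin" "pmin \<le> 1"
  using B_pos by (auto simp: pmin_def min_def)
lemma gam: "0 < gam" "gam < 1"
  using pmin by (auto simp: gam_def)

lemma Wp_nn: "0 \<le> Wp h" by (rule W_nonneg) (simp add: q_pos less_imp_le)
lemma Wm_nn: "0 \<le> Wm h" by (rule W_nonneg) (simp add: q_pos less_imp_le)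
lemma stayp_nn: "0 \<le> stay qp stepf x b r" by (rule stay_nonneg) (simp add: q_pos less_imp_le)
lemma staym_nn: "0 \<le> stay qm stepf x b r" by (rule stay_nonneg) (simp add: q_pos less_imp_le)

lemma xh_app: "xh (h @ [b]) = stepf (xh h) b"
  using xp_app_last[of stepf h b] by simp

lemma W_ratio: "Wp h = exp (xh h) * Wm h"
proof (induction h rule: rev_induct)
  case Nil then show ?case by (simp add: W_Nil)
next
  case (snoc b h)
  have "Wp (h @ [b]) = Wp h * qp (xh h) b" by (simp add: W_app)
  also have "\<dots> = exp (xh h) * Wm h * (exp (stepf (xh h) b - xh h) * qm (xh h) b)"
    using snoc.IH q_ratio[of "xh h" b] by (simp only:)
  also have "\<dots> = exp (stepf (xh h) b) * (Wm h * qm (xh h) b)"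
    by (simp add: exp_diff field_simps)
  also have "\<dots> = exp (xh (h @ [b])) * Wm (h @ [b])"
    by (simp add: W_app xh_app xp_app)
  finally show ?case .
qed

lemma Zb: "pmin / 2 * (Wp (h @ [b]) + Wm (h @ [b]))
   \<le> Wp (h @ [b]) * stay qp stepf (xh (h @ [b])) b r + Wm (h @ [b]) * stay qm stepf (xh (h @ [b])) b r"
proof (cases b)
  case True
  have x: "0 \<le> xh (h @ [b])" using True step_T by (simp add: xh_app)
  then have "Wm (h @ [b]) \<le> Wp (h @ [b])"
    using W_ratio[of "h @ [b]"] mult_right_mono[of 1 "exp (xh (h @ [b]))" "Wm (h @ [b])"] Wm_nn[of "h @ [b]"]
    by simp
  moreover have "pmin \<le> stay qp stepf (xh (h @ [b])) b r"
    using stayT[OF x, of r] True by (simp add: pmin_def)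
  moreover have "pmin * Wp (h @ [b]) \<le> Wp (h @ [b]) * stay qp stepf (xh (h @ [b])) b r"
    using calculation(2) Wp_nn by (subst mult.commute, intro mult_right_mono) auto
  moreover have "0 \<le> Wm (h @ [b]) * stay qm stepf (xh (h @ [b])) b r"
    using Wm_nn staym_nn by simp
  moreover have "pmin * Wm (h @ [b]) \<le> pmin * Wp (h @ [b])"
    using calculation(1) pmin by (intro mult_left_mono) auto
  moreover have "pmin / 2 * (Wp (h @ [b]) + Wm (h @ [b])) = pmin * Wp (h @ [b]) / 2 + pmin * Wm (h @ [b]) / 2"
    by (simp add: algebra_simps)
  ultimately show ?thesis by linarith
next
  case False
  have x: "xh (h @ [b]) \<le> 0" using False step_F by (simp add: xh_app)
  then have "Wp (h @ [b]) \<le> Wm (h @ [b])"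
    using W_ratio[of "h @ [b]"] mult_right_mono[of "exp (xh (h @ [b]))" 1 "Wm (h @ [b])"] Wm_nn[of "h @ [b]"]
    by simp
  moreover have "pmin \<le> stay qm stepf (xh (h @ [b])) b r"
    using stayF[OF x, of r] False by (simp add: pmin_def)
  moreover have "pmin * Wm (h @ [b]) \<le> Wm (h @ [b]) * stay qm stepf (xh (h @ [b])) b r"
    using calculation(2) Wm_nn by (subst mult.commute, intro mult_right_mono) auto
  moreover have "0 \<le> Wp (h @ [b]) * stay qp stepf (xh (h @ [b])) b r"
    using Wp_nn stayp_nn by simp
  moreover have "pmin * Wp (h @ [b]) \<le> pmin * Wm (h @ [b])"
    using calculation(1) pmin by (intro mult_left_mono) auto
  moreover have "pmin / 2 * (Wp (h @ [b]) + Wm (h @ [b])) = pmin * Wp (h @ [b]) / 2 + pmin * Wm (h @ [b]) / 2"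
    by (simp add: algebra_simps)
  ultimately show ?thesis by linarith
qed

end



context SL begin

lemma ring_id: "(g::real) * (2 * A - S) + g * (2 * w) = g * (2 * (A + w) - S)"
  by (simp add: algebra_simps)

definition Phi :: "nat \<Rightarrow> bool list \<Rightarrow> real" where
  "Phi T h = (1 / gam) ^ ups h * (2 * (Wp h + Wm h)
     - (Wp h * stay qp stepf (xh h) (last h) (T - length h) + Wm h * stay qm stepf (xh h) (last h) (T - length h)))"

lemma Phi_step:
  assumes h: "h \<noteq> []" and T: "length h < T"
  shows "Phi T (h @ [True]) + Phi T (h @ [False]) \<le> Phi T h"
proof -
  define a where "a = last h"
  define k where "k = ups h"
  define g where "g = 1 / gam"
  define x where "x = xh h"
  define r where "r = T - length h - 1"
  have Tr: "T - length h = Suc r" and Tr2: "T - Suc (length h) = r" using T by (auto simp: r_def)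
  have gg: "g * gam = 1" "0 < g" using gam by (auto simp: g_def)
  have sw: "Phi T (h @ [True]) + Phi T (h @ [False]) = Phi T (h @ [a]) + Phi T (h @ [\<not> a])"
    by (cases a) auto
  have PA: "Phi T (h @ [a]) = g ^ k * (2 * (Wp h * qp x a + Wm h * qm x a)
      - (Wp h * stay qp stepf x a (Suc r) + Wm h * stay qm stepf x a (Suc r)))"
    unfolding Phi_def using h Tr2
    by (simp add: ups_app W_app xh_app xp_app a_def k_def g_def x_def mult.assoc)
  define wb where "wb = Wp (h @ [\<not> a]) + Wm (h @ [\<not> a])"
  define Zb where "Zb = Wp (h @ [\<not> a]) * stay qp stepf (xh (h @ [\<not> a])) (\<not> a) r
     + Wm (h @ [\<not> a]) * stay qm stepf (xh (h @ [\<not> a])) (\<not> a) r"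
  have PB: "Phi T (h @ [\<not> a]) = g ^ Suc k * (2 * wb - Zb)"
    unfolding Phi_def wb_def Zb_def using h Tr2 by (simp add: ups_app a_def k_def g_def)
  have Zb: "pmin / 2 * wb \<le> Zb" unfolding wb_def Zb_def by (rule Zb)
  have wb_nn: "0 \<le> wb" using Wp_nn Wm_nn by (simp add: wb_def)
  have "2 * gam * wb = 2 * wb - pmin / 2 * wb" by (simp add: gam_def algebra_simps)
  then have "2 * wb - Zb \<le> 2 * gam * wb" using Zb by linarith
  then have "g ^ Suc k * (2 * wb - Zb) \<le> g ^ Suc k * (2 * gam * wb)"
    using gg by (intro mult_left_mono) auto
  also have "\<dots> = g ^ k * (2 * wb)" using gg by (simp add: algebra_simps)
  finally have B: "Phi T (h @ [\<not> a]) \<le> g ^ k * (2 * wb)" using PB by simp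
  have wbe: "wb = Wp h * qp x (\<not> a) + Wm h * qm x (\<not> a)" by (simp add: wb_def W_app x_def)
  have qs: "qp x a + qp x (\<not> a) = 1" "qm x a + qm x (\<not> a) = 1" using q_sum by (cases a; simp add: add.commute)+
  have PH: "Phi T h = g ^ k * (2 * (Wp h + Wm h)
      - (Wp h * stay qp stepf x a (Suc r) + Wm h * stay qm stepf x a (Suc r)))"
    unfolding Phi_def using Tr by (simp add: a_def k_def g_def x_def)
  have e1: "Wp h = Wp h * qp x a + Wp h * qp x (\<not> a)"
    using qs(1) by (metis distrib_left mult.right_neutral)
  have e2: "Wm h = Wm h * qm x a + Wm h * qm x (\<not> a)"
    using qs(2) by (metis distrib_left mult.right_neutral)
  have "Wp h + Wm h = (Wp h * qp x a + Wm h * qm x a) + wb"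
    unfolding wbe using e1 e2 by linarith
  then have "Phi T (h @ [a]) + g ^ k * (2 * wb) = Phi T h"
    unfolding PA PH using ring_id by metis
  then show ?thesis using sw B by linarith
qed

lemma Phi_sum_mono:
  assumes "1 \<le> m" "m \<le> T"
  shows "(\<Sum>h\<in>{h. length h = T}. Phi T h) \<le> (\<Sum>h\<in>{h. length h = m}. Phi T h)"
  using assms(2,1)
proof (induction m rule: inc_induct)
  case base then show ?case by simp
next
  case (step n)
  have "(\<Sum>h\<in>{h. length h = Suc n}. Phi T h) = (\<Sum>h\<in>{h. length h = n}. Phi T (h @ [True]) + Phi T (h @ [False]))"
    by (rule sum_len_Suc)
  also have "\<dots> \<le> (\<Sum>h\<in>{h. length h = n}. Phi T h)"
  proof (rule sum_mono)
    fix h :: "bool list" assume "h \<in> {h. length h = n}"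
    then show "Phi T (h @ [True]) + Phi T (h @ [False]) \<le> Phi T h"
      using step by (intro Phi_step) auto
  qed
  finally show ?case using step by simp
qed

lemma Phi_one: "(\<Sum>h\<in>{h. length h = Suc 0}. Phi T h) \<le> 4"
proof -
  have "(\<Sum>h\<in>{h. length h = Suc 0}. Phi T h) = Phi T [True] + Phi T [False]"
    using sum_len_Suc[where m=0 and f="Phi T"] by simp
  also have "\<dots> \<le> 2 * (Wp [True] + Wm [True]) + 2 * (Wp [False] + Wm [False])"
  proof -
    have "\<And>b. Phi T [b] \<le> 2 * (Wp [b] + Wm [b])"
    proof -
      fix b
      have "Phi T [b] = 2 * (Wp [b] + Wm [b]) - (Wp [b] * stay qp stepf (xh [b]) b (T - 1) + Wm [b] * stay qm stepf (xh [b]) b (T - 1))"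
        unfolding Phi_def by (simp add: ups_single)
      moreover have "0 \<le> Wp [b] * stay qp stepf (xh [b]) b (T - 1)" using Wp_nn stayp_nn by simp
      moreover have "0 \<le> Wm [b] * stay qm stepf (xh [b]) b (T - 1)" using Wm_nn staym_nn by simp
      ultimately show "Phi T [b] \<le> 2 * (Wp [b] + Wm [b])" by linarith
    qed
    then show ?thesis by (intro add_mono)
  qed
  also have "\<dots> = 4"
    using q_sum[of 0] by (simp add: W_def)
  finally show ?thesis .
qed

lemma finite_bound:
  assumes T: "1 \<le> T"
  shows "(\<Sum>h\<in>{h. length h = T \<and> n \<le> ups h}. (Wp h + Wm h) / 2) \<le> 2 * gam ^ n"
proof -
  have PT: "\<And>h. length h = T \<Longrightarrow> Phi T h = (1 / gam) ^ ups h * (Wp h + Wm h)"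
    unfolding Phi_def by simp
  have fin: "finite {h :: bool list. length h = T}" by (rule finite_len)
  have "(\<Sum>h\<in>{h. length h = T \<and> n \<le> ups h}. (Wp h + Wm h) / 2)
      \<le> (\<Sum>h\<in>{h. length h = T \<and> n \<le> ups h}. gam ^ n * Phi T h / 2)"
  proof (rule sum_mono)
    fix h assume "h \<in> {h. length h = T \<and> n \<le> ups h}"
    then have h: "length h = T" "n \<le> ups h" by auto
    have "1 \<le> gam ^ n * (1 / gam) ^ ups h"
    proof -
      have "gam ^ n * (1 / gam) ^ ups h = (1 / gam) ^ (ups h - n)"
        using h gam by (simp add: power_diff power_one_over field_simps)
      also have "1 \<le> \<dots>" using gam by (intro one_le_power) simp
      finally show ?thesis by simp
    qed
    then have "1 * (Wp h + Wm h) \<le> gam ^ n * (1 / gam) ^ ups h * (Wp h + Wm h)"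
      using Wp_nn Wm_nn by (intro mult_right_mono) auto
    then have "Wp h + Wm h \<le> gam ^ n * Phi T h"
      using PT[OF h(1)] by (simp add: mult.assoc)
    then show "(Wp h + Wm h) / 2 \<le> gam ^ n * Phi T h / 2"
      by (rule divide_right_mono) simp
  qed
  also have "\<dots> \<le> (\<Sum>h\<in>{h. length h = T}. gam ^ n * Phi T h / 2)"
  proof (rule sum_mono2[OF fin])
    show "{h. length h = T \<and> n \<le> ups h} \<subseteq> {h. length h = T}" by auto
    fix h assume "h \<in> {h. length h = T} - {h. length h = T \<and> n \<le> ups h}"
    then have "length h = T" by auto
    then show "0 \<le> gam ^ n * Phi T h / 2"
      using PT gam Wp_nn Wm_nn by simp
  qed
  also have "\<dots> = gam ^ n / 2 * (\<Sum>h\<in>{h. length h = T}. Phi T h)"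
    by (simp add: sum_distrib_left)
  also have "\<dots> \<le> gam ^ n / 2 * 4"
  proof (rule mult_left_mono)
    show "(\<Sum>h\<in>{h. length h = T}. Phi T h) \<le> 4"
      using Phi_sum_mono[of 1 T] T Phi_one[of T] by simp
  qed (use gam in simp)
  finally show ?thesis by simp
qed

end



locale SLM = SL Fp Fm for Fp Fm :: "real measure" +
  fixes M :: "'a measure" and theta :: "'a \<Rightarrow> int" and s :: "nat \<Rightarrow> 'a \<Rightarrow> real"
  assumes M_prob: "prob_space M"
    and theta_meas: "theta \<in> measurable M (count_space UNIV)"
    and theta_vals: "\<And>\<omega>. \<omega> \<in> space M \<Longrightarrow> theta \<omega> \<in> {-1, 1}"
    and s_meas: "\<And>t. s t \<in> borel_measurable M"
    and law_plus: "\<And>(n::nat) (B :: nat \<Rightarrow> real set). (\<And>i. i < n \<Longrightarrow> B i \<in> sets borel) \<Longrightarrow>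
        measure M {\<omega> \<in> space M. theta \<omega> = 1 \<and> (\<forall>i<n. s i \<omega> \<in> B i)}
          = (1/2) * (\<Prod>i<n. measure Fp (B i))"
    and law_minus: "\<And>(n::nat) (B :: nat \<Rightarrow> real set). (\<And>i. i < n \<Longrightarrow> B i \<in> sets borel) \<Longrightarrow>
        measure M {\<omega> \<in> space M. theta \<omega> = -1 \<and> (\<forall>i<n. s i \<omega> \<in> B i)}
          = (1/2) * (\<Prod>i<n. measure Fm (B i))"
begin

interpretation MP: prob_space M by (rule M_prob)

abbreviation "Ls \<omega> \<equiv> (\<lambda>t. L (s t \<omega>))"
abbreviation "pub \<omega> t \<equiv> pub_llr (Dplus Fp Fm) (Dminus Fp Fm) (Ls \<omega>) t"
definition "act \<omega> t = (pub \<omega> t + Ls \<omega> t > 0)"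
definition "hist \<omega> m = map (act \<omega>) [0..<m]"
definition "Bs h i = {y. (xp stepf h i + L y > 0) = h ! i}"

lemma pub_Suc: "pub \<omega> (Suc t) = stepf (pub \<omega> t) (act \<omega> t)"
  by (simp add: act_def stepf_def Let_def)

lemma pub_eq: "(\<And>j. j < i \<Longrightarrow> act \<omega> j = h ! j) \<Longrightarrow> pub \<omega> i = xp stepf h i"
  by (induction i) (simp_all add: pub_Suc del: pub_llr.simps(2))

lemma hist_iff:
  assumes len: "length h = m"
  shows "hist \<omega> m = h \<longleftrightarrow> (\<forall>i<m. s i \<omega> \<in> Bs h i)"
proof
  assume H: "hist \<omega> m = h"
  then have a: "\<And>i. i < m \<Longrightarrow> act \<omega> i = h ! i" by (auto simp: hist_def)
  show "\<forall>i<m. s i \<omega> \<in> Bs h i"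
  proof (intro allI impI)
    fix i assume i: "i < m"
    have "pub \<omega> i = xp stepf h i" using a i by (intro pub_eq) auto
    then show "s i \<omega> \<in> Bs h i" using a[OF i] by (simp add: Bs_def act_def)
  qed
next
  assume B: "\<forall>i<m. s i \<omega> \<in> Bs h i"
  have A: "i < m \<longrightarrow> act \<omega> i = h ! i" for i
  proof (induction i rule: less_induct)
    case (less i)
    show ?case
    proof
      assume im: "i < m"
      have "pub \<omega> i = xp stepf h i" using less.IH im by (intro pub_eq) auto
      then show "act \<omega> i = h ! i" using B im by (simp add: Bs_def act_def)
    qed
  qed
  then show "hist \<omega> m = h" using len A by (intro nth_equalityI) (auto simp: hist_def)
qed

lemma Bs_sets: "Bs h i \<in> sets borel"
proof -
  have "{y \<in> space borel. (xp stepf h i + L y > 0) = h ! i} \<in> sets borel" by measurable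
  then show ?thesis by (simp add: Bs_def)
qed

lemma Bs_Fp: "measure Fp (Bs h i) = qp (xp stepf h i) (h ! i)"
proof (cases "h ! i")
  case True
  then have "Bs h i = {y. - xp stepf h i < L y}" by (auto simp: Bs_def)
  then show ?thesis using True by (simp add: qp_def Gp_compl)
next
  case False
  then have "Bs h i = {y. L y \<le> - xp stepf h i}" by (auto simp: Bs_def)
  then show ?thesis using False by (simp add: qp_def Gp_def)
qed

lemma Bs_Fm: "measure Fm (Bs h i) = qm (xp stepf h i) (h ! i)"
proof (cases "h ! i")
  case True
  then have "Bs h i = {y. - xp stepf h i < L y}" by (auto simp: Bs_def)
  then show ?thesis using True by (simp add: qm_def Gm_compl)
next
  case False
  then have "Bs h i = {y. L y \<le> - xp stepf h i}" by (auto simp: Bs_def)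
  then show ?thesis using False by (simp add: qm_def Gm_def)
qed

lemma cyl_sets: "{\<omega> \<in> space M. P (theta \<omega>) \<and> (\<forall>i<m. s i \<omega> \<in> Bs h i)} \<in> sets M"
proof -
  note [measurable] = theta_meas s_meas Bs_sets
  show ?thesis by measurable
qed

lemma X1: "{\<omega> \<in> space M. True \<and> (\<forall>i<m. s i \<omega> \<in> Bs h i)} \<in> sets M"
    by (rule cyl_sets[of "\<lambda>_. True"])
lemma X3: assumes len: "length h = m" shows "{\<omega> \<in> space M. hist \<omega> m = h} = {\<omega> \<in> space M. True \<and> (\<forall>i<m. s i \<omega> \<in> Bs h i)}"
proof -
  have X2: "\<And>\<omega>. (hist \<omega> m = h) = (\<forall>i<m. s i \<omega> \<in> Bs h i)" by (rule hist_iff[OF len])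
  show ?thesis unfolding X2 by simp
qed
lemma hist_sets: assumes len: "length h = m" shows "{\<omega> \<in> space M. hist \<omega> m = h} \<in> sets M"
  unfolding X3[OF len] by (rule X1)

lemma hist_measure:
  assumes len: "length h = m"
  shows "measure M {\<omega> \<in> space M. hist \<omega> m = h} = (Wp h + Wm h) / 2"
proof -
  let ?P = "{\<omega> \<in> space M. theta \<omega> = 1 \<and> (\<forall>i<m. s i \<omega> \<in> Bs h i)}"
  let ?N = "{\<omega> \<in> space M. theta \<omega> = -1 \<and> (\<forall>i<m. s i \<omega> \<in> Bs h i)}"
  have eq: "{\<omega> \<in> space M. hist \<omega> m = h} = ?P \<union> ?N"
  proof (rule set_eqI)
    fix \<omega>
    show "\<omega> \<in> {\<omega> \<in> space M. hist \<omega> m = h} \<longleftrightarrow> \<omega> \<in> ?P \<union> ?N"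
    proof (cases "\<omega> \<in> space M")
      case True
      then have "theta \<omega> = 1 \<or> theta \<omega> = -1" using theta_vals by blast
      then show ?thesis using True by (auto simp: hist_iff[OF len])
    qed simp
  qed
  have "measure M (?P \<union> ?N) = measure M ?P + measure M ?N"
    by (rule MP.finite_measure_Union) (use cyl_sets[of "\<lambda>t. t = 1" m h] cyl_sets[of "\<lambda>t. t = -1" m h] in auto)
  also have "measure M ?P = (1/2) * (\<Prod>i<m. measure Fp (Bs h i))"
    by (rule law_plus) (rule Bs_sets)
  also have "(\<Prod>i<m. measure Fp (Bs h i)) = Wp h"
    unfolding W_def len[symmetric] by (rule prod.cong) (simp_all add: Bs_Fp)
  also have "measure M ?N = (1/2) * (\<Prod>i<m. measure Fm (Bs h i))"
    by (rule law_minus) (rule Bs_sets)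
  also have "(\<Prod>i<m. measure Fm (Bs h i)) = Wm h"
    unfolding W_def len[symmetric] by (rule prod.cong) (simp_all add: Bs_Fm)
  finally show ?thesis using eq by simp
qed

lemma length_hist[simp]: "length (hist \<omega> m) = m" by (simp add: hist_def)
lemma hist_nth: "i < m \<Longrightarrow> hist \<omega> m ! i = act \<omega> i" by (simp add: hist_def del: upt_Suc)

lemma ups_hist: "ups (hist \<omega> (Suc T)) = card {i. i < T \<and> act \<omega> i \<noteq> act \<omega> (Suc i)}"
proof -
  have "{i. Suc i < length (hist \<omega> (Suc T)) \<and> hist \<omega> (Suc T) ! i \<noteq> hist \<omega> (Suc T) ! Suc i}
     = {i. i < T \<and> act \<omega> i \<noteq> act \<omega> (Suc i)}"
    by (auto simp: hist_nth)
  then show ?thesis by (simp add: ups_def)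
qed

lemma A_sets_measure:
  "{\<omega> \<in> space M. n \<le> ups (hist \<omega> (Suc T))} \<in> sets M \<and>
   measure M {\<omega> \<in> space M. n \<le> ups (hist \<omega> (Suc T))} \<le> 2 * gam ^ n"
proof -
  let ?H = "{h. length h = Suc T \<and> n \<le> ups h}"
  have fH: "finite ?H" by (rule finite_subset[OF _ finite_len[of "Suc T"]]) auto
  have eq: "{\<omega> \<in> space M. n \<le> ups (hist \<omega> (Suc T))} = (\<Union>h\<in>?H. {\<omega> \<in> space M. hist \<omega> (Suc T) = h})"
    by auto
  have s: "(\<lambda>h. {\<omega> \<in> space M. hist \<omega> (Suc T) = h}) ` ?H \<subseteq> sets M"
    using hist_sets[where m="Suc T"] by auto
  have m: "(\<Union>h\<in>?H. {\<omega> \<in> space M. hist \<omega> (Suc T) = h}) \<in> sets M"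
    using s fH by (intro sets.finite_UN) auto
  have "measure M (\<Union>h\<in>?H. {\<omega> \<in> space M. hist \<omega> (Suc T) = h})
      = (\<Sum>h\<in>?H. measure M {\<omega> \<in> space M. hist \<omega> (Suc T) = h})"
    by (rule measure_finite_Union[OF fH s]) (auto simp: disjoint_family_on_def MP.emeasure_eq_measure)
  also have "\<dots> = (\<Sum>h\<in>?H. (Wp h + Wm h) / 2)"
    by (rule sum.cong) (auto simp: hist_measure)
  also have "\<dots> \<le> 2 * gam ^ n" by (rule finite_bound) simp
  finally show ?thesis using eq m by simp
qed

end



lemma enat_card_iff:
  fixes S :: "nat set"
  shows "enat n \<le> (if finite S then enat (card S) else \<infinity>) \<longleftrightarrow> (\<exists>T. n \<le> card {i. i < T \<and> i \<in> S})"
proof (cases "finite S")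
  case True
  then obtain k where k: "S \<subseteq> {..<k}" using finite_nat_iff_bounded by blast
  have "{i. i < k \<and> i \<in> S} = S" using k by auto
  moreover have "\<And>T. card {i. i < T \<and> i \<in> S} \<le> card S"
    using True by (intro card_mono) auto
  ultimately show ?thesis using True by (auto intro: le_trans exI[of _ k])
next
  case False
  then obtain B where B: "finite B" "card B = n" "B \<subseteq> S" using infinite_arbitrarily_large by blast
  then obtain k where k: "B \<subseteq> {..<k}" using finite_nat_iff_bounded by blast
  have "card B \<le> card {i. i < k \<and> i \<in> S}"
    using B k by (intro card_mono) auto
  then show ?thesis using False B by auto
qed

context SLM begin

interpretation MP: prob_space M by (rule M_prob)

lemma upsets_iff:
  "enat n \<le> upsets (Dplus Fp Fm) (Dminus Fp Fm) (\<lambda>t. L (s t \<omega>)) \<longleftrightarrow> (\<exists>T. n \<le> ups (hist \<omega> (Suc T)))"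
proof -
  have S: "{t. action (Dplus Fp Fm) (Dminus Fp Fm) (\<lambda>t. L (s t \<omega>)) t \<noteq> action (Dplus Fp Fm) (Dminus Fp Fm) (\<lambda>t. L (s t \<omega>)) (Suc t)}
     = {t. act \<omega> t \<noteq> act \<omega> (Suc t)}"
    by (auto simp: action_def act_def simp del: pub_llr.simps)
  have c: "\<And>T. ups (hist \<omega> (Suc T)) = card {i. i < T \<and> i \<in> {t. act \<omega> t \<noteq> act \<omega> (Suc t)}}"
    by (simp add: ups_hist)
  show ?thesis unfolding upsets_def Let_def S c by (rule enat_card_iff)
qed

lemma main:
  "(\<forall>n::nat. {\<omega> \<in> space M.
             upsets (Dplus Fp Fm) (Dminus Fp Fm) (\<lambda>t. llr Fp Fm (s t \<omega>)) \<ge> enat n} \<in> sets M)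
    \<and> (\<exists>c::real. c > 0 \<and> (\<exists>\<gamma>::real. 0 < \<gamma> \<and> \<gamma> < 1 \<and>
        (\<forall>n::nat. n > 0 \<longrightarrow>
           measure M {\<omega> \<in> space M.
             upsets (Dplus Fp Fm) (Dminus Fp Fm) (\<lambda>t. llr Fp Fm (s t \<omega>)) \<ge> enat n}
           \<le> c * \<gamma> ^ n)))"
proof -
  define A where "A n T = {\<omega> \<in> space M. n \<le> ups (hist \<omega> (Suc T))}" for n T
  have E: "{\<omega> \<in> space M. upsets (Dplus Fp Fm) (Dminus Fp Fm) (\<lambda>t. llr Fp Fm (s t \<omega>)) \<ge> enat n}
      = (\<Union>T. A n T)" for n
    using upsets_iff by (auto simp: A_def)
  have As: "A n T \<in> sets M" for n T using A_sets_measure by (simp add: A_def)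
  have Am: "measure M (A n T) \<le> 2 * gam ^ n" for n T using A_sets_measure by (simp add: A_def)
  have Es: "(\<Union>T. A n T) \<in> sets M" for n using As by auto
  have inc: "incseq (A n)" for n
  proof (rule incseq_SucI)
    fix T
    have "ups (hist \<omega> (Suc T)) \<le> ups (hist \<omega> (Suc (Suc T)))" for \<omega>
      unfolding ups_hist by (rule card_mono) auto
    then show "A n T \<subseteq> A n (Suc T)" unfolding A_def using le_trans by blast
  qed
  have bound: "measure M (\<Union>T. A n T) \<le> 2 * gam ^ n" for n
  proof (rule LIMSEQ_le_const2)
    show "(\<lambda>T. measure M (A n T)) \<longlonglongrightarrow> measure M (\<Union>T. A n T)"
      by (rule MP.finite_Lim_measure_incseq) (use As inc in auto)
    show "\<exists>N. \<forall>T\<ge>N. measure M (A n T) \<le> 2 * gam ^ n" using Am by blast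
  qed
  show ?thesis
  proof (intro conjI allI exI impI)
    fix n :: nat
    show "{\<omega> \<in> space M. upsets (Dplus Fp Fm) (Dminus Fp Fm) (\<lambda>t. llr Fp Fm (s t \<omega>)) \<ge> enat n} \<in> sets M"
      unfolding E by (rule Es)
    show "measure M {\<omega> \<in> space M. upsets (Dplus Fp Fm) (Dminus Fp Fm) (\<lambda>t. llr Fp Fm (s t \<omega>)) \<ge> enat n}
      \<le> 2 * gam ^ n" unfolding E by (rule bound)
  qed (use gam in auto)
qed

end

theorem proposition1:
  fixes M :: "'a measure" and theta :: "'a \<Rightarrow> int" and s :: "nat \<Rightarrow> 'a \<Rightarrow> real"
    and Fp Fm :: "real measure"
  assumes Fp_prob: "prob_space Fp" and Fm_prob: "prob_space Fm"
    and Fp_sets: "sets Fp = sets borel" and Fm_sets: "sets Fm = sets borel"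
    and ac1: "absolutely_continuous Fp Fm" and ac2: "absolutely_continuous Fm Fp"
    and unbounded: "\<And>K::real.
         (1/2) * measure Fp {x \<in> space Fp. llr Fp Fm x > K}
           + (1/2) * measure Fm {x \<in> space Fm. llr Fp Fm x > K} > 0
       \<and> (1/2) * measure Fp {x \<in> space Fp. llr Fp Fm x < - K}
           + (1/2) * measure Fm {x \<in> space Fm. llr Fp Fm x < - K} > 0"
    and M_prob: "prob_space M"
    and theta_meas: "theta \<in> measurable M (count_space UNIV)"
    and theta_vals: "\<And>\<omega>. \<omega> \<in> space M \<Longrightarrow> theta \<omega> \<in> {-1, 1}"
    and s_meas: "\<And>t. s t \<in> borel_measurable M"
    and law_plus: "\<And>(n::nat) (B :: nat \<Rightarrow> real set). (\<And>i. i < n \<Longrightarrow> B i \<in> sets borel) \<Longrightarrow>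
        measure M {\<omega> \<in> space M. theta \<omega> = 1 \<and> (\<forall>i<n. s i \<omega> \<in> B i)}
          = (1/2) * (\<Prod>i<n. measure Fp (B i))"
    and law_minus: "\<And>(n::nat) (B :: nat \<Rightarrow> real set). (\<And>i. i < n \<Longrightarrow> B i \<in> sets borel) \<Longrightarrow>
        measure M {\<omega> \<in> space M. theta \<omega> = -1 \<and> (\<forall>i<n. s i \<omega> \<in> B i)}
          = (1/2) * (\<Prod>i<n. measure Fm (B i))"
  shows "(\<forall>n::nat. {\<omega> \<in> space M.
             upsets (Dplus Fp Fm) (Dminus Fp Fm) (\<lambda>t. llr Fp Fm (s t \<omega>)) \<ge> enat n} \<in> sets M)
    \<and> (\<exists>c::real. c > 0 \<and> (\<exists>\<gamma>::real. 0 < \<gamma> \<and> \<gamma> < 1 \<and>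
        (\<forall>n::nat. n > 0 \<longrightarrow>
           measure M {\<omega> \<in> space M.
             upsets (Dplus Fp Fm) (Dminus Fp Fm) (\<lambda>t. llr Fp Fm (s t \<omega>)) \<ge> enat n}
           \<le> c * \<gamma> ^ n)))"
proof -
  interpret SLM Fp Fm M theta s
    by (intro SLM.intro SL.intro SLM_axioms.intro) (fact Fp_prob Fm_prob Fp_sets Fm_sets ac1 ac2 unbounded M_prob theta_meas theta_vals s_meas law_plus law_minus)+
  show ?thesis by (rule main)
qed

end
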